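(* Let $h$ be an odd positive integer, $m=3h$, $e=3^h$, and for $u\in\mathrm{GF}(3^m)$ let $Q_u(y)=\mathrm{Tr}(uy^{e+1}+y^2)$, $y\in\mathrm{GF}(3^m)$. Then for every $u\in\mathrm{GF}(3^m)$, at least one of the quadratic forms $Q_u$ and $Q_{-1-u}$ has rank $m$.
   Context: $\mathrm{Tr}$ denotes the absolute trace from $\mathrm{GF}(3^m)$ onto $\mathrm{GF}(3)$. The rank of a quadratic form $Q:\mathrm{GF}(3^m)\to\mathrm{GF}(3)$ is $m-\dim_{\mathrm{GF}(3)}V_Q$, where $V_Q=\{x: Q(x+z)-Q(x)-Q(z)=0\ \text{for all } z\in\mathrm{GF}(3^m)\}$. (For $Q_u$ one has $Q_u(y+z)-Q_u(y)-Q_u(z)=\mathrm{Tr}((u^{e^2}y^{e^2}+uy^e-y)z)$.) *)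

theory Defs
  imports Main
begin

text \<open>The field GF(3^m) is modelled as a finite field type 'a with CARD('a) = 3^m.
  GF(3) is its prime subfield, i.e. the elements of_nat 0, of_nat 1, of_nat 2.\<close>

definition abs_trace :: "nat \<Rightarrow> 'a::{field,finite} \<Rightarrow> 'a" where
  "abs_trace m x = (\<Sum>i<m. x ^ (3 ^ i))"

definition Qform :: "nat \<Rightarrow> nat \<Rightarrow> 'a::{field,finite} \<Rightarrow> 'a \<Rightarrow> 'a" where
  "Qform m e u y = abs_trace m (u * y ^ (e + 1) + y ^ 2)"

definition radical :: "('a::{field,finite} \<Rightarrow> 'a) \<Rightarrow> 'a set" where
  "radical Q = {x. \<forall>z. Q (x + z) - Q x - Q z = 0}"

definition gf3_span :: "'a::{field,finite} set \<Rightarrow> 'a set" where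
  "gf3_span S = {x. \<exists>c. (\<forall>s\<in>S. c s \<in> {0,1,2::nat}) \<and> x = (\<Sum>s\<in>S. of_nat (c s) * s)}"

definition gf3_dim :: "'a::{field,finite} set \<Rightarrow> nat" where
  "gf3_dim V = (LEAST n. \<exists>S. S \<subseteq> V \<and> card S = n \<and> gf3_span S = V)"

definition qrank :: "nat \<Rightarrow> ('a::{field,finite} \<Rightarrow> 'a) \<Rightarrow> nat" where
  "qrank m Q = m - gf3_dim (radical Q)"

end

theory Submission
  imports Defs "HOL-Computational_Algebra.Polynomial"
begin

lemma char3:
  assumes "card (UNIV :: 'a::{field,finite} set) = 3 ^ n" "n > 0"
  shows "(3::'a) = 0"
proof -
  have "(\<Sum>x\<in>UNIV. x + 1) = (\<Sum>x\<in>(UNIV::'a set). x)"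
    by (rule sum.reindex_bij_witness[of _ "\<lambda>x. x - 1" "\<lambda>x. x + 1"]) auto
  then have "of_nat (card (UNIV::'a set)) = (0::'a)" by (simp add: sum.distrib)
  then have "(of_nat 3::'a) ^ n = 0" using assms by (simp add: of_nat_power)
  thus ?thesis by simp
qed

lemma fermat:
  fixes x :: "'a::{field,finite}"
  shows "x ^ card (UNIV::'a set) = x"
proof (cases "x = 0")
  case True
  have "card (UNIV::'a set) > 0" using finite_UNIV_card_ge_0 finite_UNIV by blast
  then show ?thesis using True by simp
next
  case False
  let ?A = "UNIV - {0::'a}"
  have "(\<Prod>y\<in>?A. x * y) = (\<Prod>y\<in>?A. y)"
    by (rule prod.reindex_bij_witness[of _ "\<lambda>y. y / x" "\<lambda>y. x * y"]) (use False in auto)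
  then have "x ^ card ?A * (\<Prod>y\<in>?A. y) = (\<Prod>y\<in>?A. y)"
    by (simp add: prod.distrib)
  moreover have "(\<Prod>y\<in>?A. y) \<noteq> 0" by simp
  ultimately have "x ^ card ?A = 1" by simp
  moreover have "card ?A = card (UNIV::'a set) - 1" by (simp add: card_Diff_singleton)
  moreover have "card (UNIV::'a set) > 0" using finite_UNIV_card_ge_0 finite_UNIV by blast
  ultimately show ?thesis
    by (metis Suc_diff_1 mult.right_neutral power_Suc)
qed

lemma frob3:
  assumes "(3::'a::comm_ring_1) = 0"
  shows "(a + b) ^ 3 = a ^ 3 + (b::'a) ^ 3"
proof -
  have "(a + b) ^ 3 = a ^ 3 + b ^ 3 + 3 * (a^2*b + a*b^2)"
    by (simp add: power2_eq_square power3_eq_cube algebra_simps)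
  then show ?thesis using assms by simp
qed

lemma frobk:
  assumes "(3::'a::comm_ring_1) = 0"
  shows "(a + b) ^ (3 ^ k) = a ^ (3 ^ k) + (b::'a) ^ (3 ^ k)"
proof (induction k)
  case 0 then show ?case by simp
next
  case (Suc k)
  have "(a + b) ^ (3 ^ Suc k) = ((a + b) ^ (3 ^ k)) ^ 3"
    by (simp add: power_mult[symmetric] mult.commute)
  also have "\<dots> = (a ^ (3 ^ k)) ^ 3 + (b ^ (3 ^ k)) ^ 3" using Suc frob3[OF assms] by simp
  also have "\<dots> = a ^ (3 ^ Suc k) + b ^ (3 ^ Suc k)"
    by (simp add: power_mult[symmetric] mult.commute)
  finally show ?case .
qed

lemma frob_neg: "(- (a::'a::comm_ring_1)) ^ (3 ^ k) = - (a ^ (3 ^ k))"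
  by simp

lemma frob_diff:
  assumes "(3::'a::comm_ring_1) = 0"
  shows "(a - b) ^ (3 ^ k) = a ^ (3 ^ k) - (b::'a) ^ (3 ^ k)"
  using frobk[OF assms, of a "-b" k] by simp

lemma frob_sum:
  assumes "(3::'a::comm_ring_1) = 0" "finite A"
  shows "(sum f A) ^ (3 ^ k) = (\<Sum>i\<in>A. (f i :: 'a) ^ (3 ^ k))"
  using assms(2) by (induction A rule: finite_induct) (auto simp: frobk[OF assms(1)] power_0_left)


lemma tr_add:
  assumes "(3::'a::{field,finite}) = 0"
  shows "abs_trace m (a + b) = abs_trace m a + abs_trace m (b::'a)"
  unfolding abs_trace_def by (simp add: frobk[OF assms] sum.distrib)

lemma tr_neg:
  shows "abs_trace m (- a) = - abs_trace m (a::'a::{field,finite})"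
  unfolding abs_trace_def by (simp add: sum_negf)

lemma tr_diff:
  assumes "(3::'a::{field,finite}) = 0"
  shows "abs_trace m (a - b) = abs_trace m a - abs_trace m (b::'a)"
  using tr_add[OF assms, of m a "-b"] tr_neg[of m b] by simp

lemma tr_zero: "abs_trace m (0::'a::{field,finite}) = 0"
  unfolding abs_trace_def by (simp add: power_0_left)

lemma tr_pow3:
  assumes F: "\<And>x::'a::{field,finite}. x ^ (3 ^ m) = x"
  shows "abs_trace m (a ^ 3) = abs_trace m (a::'a)"
proof -
  define f where "f i = a ^ (3 ^ i)" for i
  have "abs_trace m (a ^ 3) = (\<Sum>i<m. f (Suc i))"
    unfolding abs_trace_def f_def by (simp add: power_mult[symmetric] mult.commute)
  moreover have "f 0 + (\<Sum>i<m. f (Suc i)) = (\<Sum>i<m. f i) + f m"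
    using sum.lessThan_Suc_shift[of f m] sum.lessThan_Suc[of f m] by simp
  moreover have "f m = f 0" using F unfolding f_def by simp
  ultimately show ?thesis unfolding abs_trace_def f_def by simp
qed

lemma tr_powk:
  assumes F: "\<And>x::'a::{field,finite}. x ^ (3 ^ m) = x"
  shows "abs_trace m (a ^ (3 ^ k)) = abs_trace m (a::'a)"
proof (induction k)
  case 0 then show ?case by simp
next
  case (Suc k)
  have "a ^ (3 ^ Suc k) = (a ^ (3 ^ k)) ^ 3" by (simp add: power_mult[symmetric] mult.commute)
  then show ?case using tr_pow3[OF F] Suc by simp
qed

lemma nondegen:
  assumes card: "card (UNIV :: 'a::{field,finite} set) = 3 ^ m" and m: "m > 0"
    and Z: "\<And>z. abs_trace m (a * z) = (0::'a)"
  shows "a = 0"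
proof (rule ccontr)
  assume a: "a \<noteq> 0"
  have T0: "abs_trace m w = 0" for w :: 'a using Z[of "w / a"] a by simp
  define p :: "'a poly" where "p = (\<Sum>i<m. monom 1 (3 ^ i))"
  have pw: "poly p w = abs_trace m w" for w
    unfolding p_def abs_trace_def by (simp add: poly_sum poly_monom)
  have "coeff p (3 ^ (m - 1)) = (\<Sum>i<m. if i = m - 1 then 1 else 0)"
    unfolding p_def coeff_sum coeff_monom by (intro sum.cong) auto
  also have "\<dots> = 1" using m by simp
  finally have "p \<noteq> 0" by auto
  then have "card {x. poly p x = 0} \<le> degree p" by (rule card_poly_roots_bound)
  also have "degree p \<le> 3 ^ (m - 1)" unfolding p_def
    by (rule degree_sum_le) (auto intro: order.trans[OF degree_monom_le])
  finally have "card (UNIV::'a set) \<le> 3 ^ (m - 1)" using pw T0 by simp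
  with card m show False
    using power_strict_increasing[of "m - 1" m "3::nat"] by simp
qed


lemma rad_formula:
  assumes c3: "(3::'a::{field,finite}) = 0" and F: "\<And>x::'a. x ^ (3 ^ (3 * h)) = x"
  shows "Qform (3*h) (3^h) u (x+z) - Qform (3*h) (3^h) u x - Qform (3*h) (3^h) u z
     = abs_trace (3*h) ((u ^ (3 ^ (2*h)) * x ^ (3 ^ (2*h)) + u * x ^ (3^h) - x) * (z::'a))"
proof -
  let ?T = "abs_trace (3*h) :: 'a \<Rightarrow> 'a"
  define e :: nat where "e = 3 ^ h"
  define E :: nat where "E = 3 ^ (2*h)"
  have two: "(2::'a) = - 1" using c3 by (metis add_eq_0_iff2 numeral_Bit1 numeral_One one_add_one)
  have 1: "(x+z)^(e+1) = (x^e + z^e)*(x+z)" unfolding e_def using frobk[OF c3] by simp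
  have inner: "(u*(x+z)^(e+1) + (x+z)^2) - (u*x^(e+1)+x^2) - (u*z^(e+1)+z^2)
      = u*x^e*z + u*x*z^e + 2*x*z"
    unfolding 1 by (simp add: algebra_simps power2_eq_square)
  have "Qform (3*h) (3^h) u (x+z) - Qform (3*h) (3^h) u x - Qform (3*h) (3^h) u z
      = ?T ((u*(x+z)^(e+1) + (x+z)^2) - (u*x^(e+1)+x^2) - (u*z^(e+1)+z^2))"
    unfolding Qform_def e_def by (simp add: tr_diff[OF c3])
  also have "\<dots> = ?T (u*x^e*z) + ?T (u*x*z^e) + ?T (2*x*z)"
    unfolding inner by (simp add: tr_add[OF c3])
  also have "?T (u*x*z^e) = ?T ((u*x*z^e) ^ E)"
    unfolding E_def by (rule tr_powk[OF F, symmetric])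
  also have "(u*x*z^e) ^ E = u^E * x^E * z"
  proof -
    have "(z^e)^E = z ^ (3 ^ (3*h))" unfolding e_def E_def
      by (simp add: power_mult[symmetric] power_add[symmetric])
    then show ?thesis using F by (simp add: power_mult_distrib)
  qed
  also have "?T (2*x*z) = ?T (- (x * z))"
  proof -
    have "(2::'a)*x*z = - (x*z)" by (subst two) simp
    then show ?thesis by (rule arg_cong)
  qed
  also have "?T (u*x^e*z) + ?T (u^E * x^E * z) + ?T (- (x * z))
     = ?T ((u ^ E * x ^ E + u * x ^ e - x) * z)"
  proof -
    have "(u ^ E * x ^ E + u * x ^ e - x) * z = u*x^e*z + u^E * x^E * z + (- (x * z))"
      by (simp add: algebra_simps)
    then show ?thesis by (simp only: tr_add[OF c3])
  qed
  finally show ?thesis unfolding e_def E_def .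
qed


lemma det_identity:
  fixes a b c x y w :: "'a::comm_ring_1"
  shows "(-1 + a^2 + b^2 + c^2 + 2*a*b*c) * x
    = (1 - b^2) * (c*w + a*y - x) + (a + b*c) * (a*x + b*w - y)
      + (a*b + c) * (b*y + c*x - w)"
  by (simp add: algebra_simps power2_eq_square)

lemma kernel_det:
  assumes c3: "(3::'a::{field,finite}) = 0" and F: "\<And>x::'a. x ^ (3 ^ (3 * h)) = x"
    and L: "u ^ (3 ^ (2*h)) * x ^ (3 ^ (2*h)) + u * x ^ (3^h) - x = 0" and x: "x \<noteq> 0"
  shows "-1 + u^2 + (u^(3^h))^2 + ((u^(3^h))^(3^h))^2 + 2*u*u^(3^h)*(u^(3^h))^(3^h) = (0::'a)"
proof -
  define s :: "'a \<Rightarrow> 'a" where "s t = t ^ (3^h)" for t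
  have sm: "s (a*b) = s a * s b" for a b unfolding s_def by (simp add: power_mult_distrib)
  have sa: "s (a+b) = s a + s b" for a b unfolding s_def by (rule frobk[OF c3])
  have sd: "s (a-b) = s a - s b" for a b unfolding s_def by (rule frob_diff[OF c3])
  have s0: "s 0 = 0" unfolding s_def by (simp add: power_0_left)
  have s3: "s (s (s t)) = t" for t unfolding s_def
  proof -
    have "((t ^ 3 ^ h) ^ 3 ^ h) ^ 3 ^ h = t ^ 3 ^ (h + h + h)"
      by (simp add: power_mult[symmetric] power_add[symmetric])
    also have "h + h + h = 3 * h" by simp
    finally show "((t ^ 3 ^ h) ^ 3 ^ h) ^ 3 ^ h = t" using F[of t] by simp
  qed
  have s2: "t ^ (3 ^ (2*h)) = s (s t)" for t unfolding s_def
    by (simp add: power_mult[symmetric] power_add[symmetric] mult_2)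
  have E1: "s (s u) * s (s x) + u * s x - x = 0" using L unfolding s2 by (simp add: s_def)
  have E2: "u * x + s u * s (s x) - s x = 0"
    using arg_cong[OF E1, of s] by (simp add: sm sa sd s0 s3)
  have E3: "s u * s x + s (s u) * x - s (s x) = 0"
    using arg_cong[OF E2, of s] by (simp add: sm sa sd s0 s3)
  have "(-1 + u^2 + (s u)^2 + (s (s u))^2 + 2*u*(s u)*(s (s u))) * x = 0"
    unfolding det_identity[where a=u and b="s u" and c="s (s u)" and x=x and y="s x" and w="s (s x)"]
    by (simp only: E1 E2 E3 mult_zero_right add_0_right)
  then show ?thesis using x by (simp add: s_def)
qed


lemma nonsq:
  assumes c3: "(3::'a::field) = 0" and h: "odd h" and s2: "s^2 = (-1::'a)" and sq: "s ^ (3^h) = s"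
  shows False
proof -
  obtain k where k: "h = 2*k+1" using h oddE by blast
  have "(9::nat)^k mod 4 = 1" using power_mod[of "9::nat" 4 k] by simp
  then have j: "(9::nat)^k = 4*((9::nat)^k div 4) + 1" using div_mult_mod_eq[of "(9::nat)^k" 4] by simp
  define j where "j = (9::nat)^k div 4"
  from j have j: "(9::nat)^k = 4*j + 1" unfolding j_def .
  have "(3::nat)^h = 3 * 9^k" unfolding k by (simp add: power_mult)
  also have "\<dots> = 4 * (3*j) + 3" using j by simp
  finally have e: "(3::nat)^h = 4 * (3*j) + 3" .
  have s4: "s^4 = 1"
  proof -
    have "s^4 = (s^2)^2" by (simp only: power_mult[symmetric]) simp
    then show ?thesis using s2 by simp
  qed
  have "s ^ (3^h) = (s^4)^(3*j) * s^3" unfolding e by (simp only: power_add power_mult)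
  also have "\<dots> = s^2 * s" using s4 by (simp add: power2_eq_square power3_eq_cube)
  also have "\<dots> = - s" using s2 by simp
  finally have "s = - s" using sq by simp
  then have ss: "s + s = s + - s" by (metis)
  have "2 * s = 0" unfolding mult_2 ss by (rule right_minus)
  moreover have "(2::'a) \<noteq> 0"
  proof
    assume z: "(2::'a) = 0"
    have "(1::'a) = 3 - 2" by simp
    also have "\<dots> = 0" by (simp only: z c3 diff_zero)
    finally show False by simp
  qed
  ultimately have "s = 0" by simp
  then show False using s2 by simp
qed


theorem mainTheorem13:
  fixes u :: "'a::{field,finite}" and h :: nat
  assumes "odd h" and "card (UNIV :: 'a set) = 3 ^ (3 * h)"
  shows "qrank (3 * h) (Qform (3 * h) (3 ^ h) u) = 3 * h
       \<or> qrank (3 * h) (Qform (3 * h) (3 ^ h) (-1 - u)) = 3 * h"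
proof -
  have h0: "h > 0" using assms(1) by (cases h) auto
  have c3: "(3::'a) = 0" using char3[OF assms(2)] h0 by simp
  have F: "\<And>x::'a. x ^ (3 ^ (3 * h)) = x" using fermat[where 'a='a] assms(2) by metis
  have rank: "qrank (3*h) (Qform (3*h) (3^h) w) = 3*h"
    if R: "radical (Qform (3*h) (3^h) w) \<subseteq> {0}" for w :: 'a
  proof -
    have "0 \<in> radical (Qform (3*h) (3^h) w)"
      unfolding radical_def Qform_def by (simp add: tr_zero power_0_left)
    then have "radical (Qform (3*h) (3^h) w) = {0}" using R by auto
    moreover have "gf3_dim {0::'a} = 0" unfolding gf3_dim_def
      by (rule Least_eq_0) (rule exI[of _ "{}"], auto simp: gf3_span_def)
    ultimately show ?thesis unfolding qrank_def by simp
  qed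
  have det: "-1 + w^2 + (w^(3^h))^2 + ((w^(3^h))^(3^h))^2 + 2*w*w^(3^h)*(w^(3^h))^(3^h) = 0"
    if R: "\<not> radical (Qform (3*h) (3^h) w) \<subseteq> {0}" for w :: 'a
  proof -
    obtain x where x: "x \<in> radical (Qform (3*h) (3^h) w)" "x \<noteq> 0" using R by auto
    have Z: "abs_trace (3*h) ((w^(3^(2*h)) * x^(3^(2*h)) + w*x^(3^h) - x) * z) = 0" for z
      using x(1) rad_formula[OF c3 F, of w x z] unfolding radical_def by auto
    have m0: "3*h > 0" using h0 by simp
    have "w^(3^(2*h)) * x^(3^(2*h)) + w*x^(3^h) - x = 0"
      by (rule nondegen[OF assms(2) m0 Z])
    then show ?thesis by (rule kernel_det[OF c3 F _ x(2)])
  qed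
  show ?thesis
  proof (rule ccontr)
    assume "\<not> ?thesis"
    then have A: "\<not> radical (Qform (3*h) (3^h) u) \<subseteq> {0}"
      "\<not> radical (Qform (3*h) (3^h) (-1-u)) \<subseteq> {0}" using rank by blast+
    define u1 where "u1 = u^(3^h)"
    define u2 where "u2 = u1^(3^h)"
    have Du: "-1 + u^2 + u1^2 + u2^2 + 2*u*u1*u2 = 0" using det[OF A(1)] by (simp add: u1_def u2_def)
    have v1: "(-1-u)^(3^h) = -1 - u1" unfolding u1_def using frob_diff[OF c3, of "-1" u h] by simp
    have v2: "(-1-u1)^(3^h) = -1 - u2" unfolding u2_def using frob_diff[OF c3, of "-1" u1 h] by simp
    have Dv: "-1 + (-1-u)^2 + (-1-u1)^2 + (-1-u2)^2 + 2*(-1-u)*(-1-u1)*(-1-u2) = 0"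
      using det[OF A(2)] unfolding v1 v2 .
    have ident: "(-1 + u^2 + u1^2 + u2^2 + 2*u*u1*u2)
       + (-1 + (-1-u)^2 + (-1-u1)^2 + (-1-u2)^2 + 2*(-1-u)*(-1-u1)*(-1-u2))
       + (1 + (u+u1+u2)^2) = 3*(u^2+u1^2+u2^2)"
      by (simp add: algebra_simps power2_eq_square)
    then have "1 + (u+u1+u2)^2 = 0" unfolding Du Dv c3 by simp
    then have sq: "(u+u1+u2)^2 = -1" by (simp add: add_eq_0_iff)
    have u3: "u2^(3^h) = u"
    proof -
      have "u2^(3^h) = u ^ (3 ^ (h + h + h))" unfolding u2_def u1_def
        by (simp add: power_mult[symmetric] power_add[symmetric])
      also have "h + h + h = 3 * h" by simp
      finally show ?thesis using F[of u] by simp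
    qed
    have "(u+u1+u2)^(3^h) = u+u1+u2"
      unfolding frobk[OF c3] using u3 by (simp add: u1_def u2_def algebra_simps)
    then show False using nonsq[OF c3 assms(1) sq] by blast
  qed
qed

end
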